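(* Consider the discrete-time linear Gaussian state-space model on time steps $k=1,2,\ldots,T$ (where $T=N+M$, with $N$ steps carrying an observation and $M$ steps with missing observation, in any order): $$\mathbf{x}_1 \sim \mathcal{N}(\mathbf{0},\mathbf{P}_\infty),\qquad \mathbf{x}_k = \mathbf{F}_{k-1}\mathbf{x}_{k-1} + \mathbf{q}_{k-1},\ \ \mathbf{q}_{k-1}\sim\mathcal{N}(\mathbf{0},\mathbf{Q}_{k-1})\ (k\ge 2),$$ $$y_k = \mathbf{H}\mathbf{x}_k + e_k,\quad e_k\sim\mathcal{N}(0,\sigma_k^2)\quad\text{for each observed step }k,$$ where $\mathbf{x}_k\in\mathbb{R}^{n_x}$, $\mathbf{H}\in\mathbb{R}^{1\times n_x}$, $\mathbf{P}_\infty,\mathbf{Q}_{k-1}$ are symmetric positive semidefinite, $\sigma_k^2>0$, and all noises are mutually independent and independent of $\mathbf{x}_1$. For each $k$ define an element $a_k=(\mathbf{A}_k,\mathbf{b}_k,\mathbf{C}_k,\boldsymbol{\eta}_k,\mathbf{J}_k)$ as follows. - If step $k$ has no observation: for $k>1$, $\mathbf{A}_k=\mathbf{F}_{k-1}$, $\mathbf{b}_k=\mathbf{0}$, $\mathbf{C}_k=\mathbf{Q}_{k-1}$; for $k=1$, $\mathbf{A}_1=\mathbf{0}$, $\mathbf{b}_1=\mathbf{0}$, $\mathbf{C}_1=\mathbf{P}_\infty$; and in both cases $\boldsymbol{\eta}_k=\mathbf{0}$, $\mathbf{J}_k=\mathbf{0}$. - If step $k>1$ has an observation: with $S_k=\mathbf{H}\mathbf{Q}_{k-1}\mathbf{H}^\top+\sigma_k^2$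 and $\mathbf{K}_k=\mathbf{Q}_{k-1}\mathbf{H}^\top S_k^{-1}$, set $\mathbf{A}_k=(\mathbf{I}-\mathbf{K}_k\mathbf{H})\mathbf{F}_{k-1}$, $\mathbf{b}_k=\mathbf{K}_k y_k$, $\mathbf{C}_k=(\mathbf{I}-\mathbf{K}_k\mathbf{H})\mathbf{Q}_{k-1}$, $\boldsymbol{\eta}_k=\mathbf{F}_{k-1}^\top\mathbf{H}^\top S_k^{-1}y_k$, $\mathbf{J}_k=\mathbf{F}_{k-1}^\top\mathbf{H}^\top S_k^{-1}\mathbf{H}\mathbf{F}_{k-1}$. - If step $k=1$ has an observation: with $S_1=\mathbf{H}\mathbf{P}_\infty\mathbf{H}^\top+\sigma_1^2$ and $\mathbf{K}_1=\mathbf{P}_\infty\mathbf{H}^\top S_1^{-1}$, set $\mathbf{A}_1=\mathbf{0}$, $\mathbf{b}_1=\mathbf{K}_1y_1$, $\mathbf{C}_1=\mathbf{P}_\infty-\mathbf{K}_1S_1\mathbf{K}_1^\top$, $\boldsymbol{\eta}_1=\mathbf{0}$, $\mathbf{J}_1=\mathbf{0}$. Define the binary operator $a_i\otimes a_j=(\mathbf{A}_{ij},\mathbf{b}_{ij},\mathbf{C}_{ij},\boldsymbol{\eta}_{ij},\mathbf{J}_{ij})$ by $$\mathbf{A}_{ij}=\mathbf{A}_j(\mathbf{I}+\mathbf{C}_i\mathbf{J}_j)^{-1}\mathbf{A}_i,\quad \mathbf{b}_{ij}=\mathbf{A}_j(\mathbf{I}+\mathbf{C}_i\mathbf{J}_j)^{-1}(\mathbf{b}_i+\mathbf{C}_i\boldsymbol{\eta}_j)+\mathbf{b}_j,$$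 $$\mathbf{C}_{ij}=\mathbf{A}_j(\mathbf{I}+\mathbf{C}_i\mathbf{J}_j)^{-1}\mathbf{C}_i\mathbf{A}_j^\top+\mathbf{C}_j,\quad \boldsymbol{\eta}_{ij}=\mathbf{A}_i^\top(\mathbf{I}+\mathbf{J}_j\mathbf{C}_i)^{-1}(\boldsymbol{\eta}_j-\mathbf{J}_j\mathbf{b}_i)+\boldsymbol{\eta}_i,$$ $$\mathbf{J}_{ij}=\mathbf{A}_i^\top(\mathbf{I}+\mathbf{J}_j\mathbf{C}_i)^{-1}\mathbf{J}_j\mathbf{A}_i+\mathbf{J}_i,$$ and the prefix elements $a_1^*=a_1$, $a_k^*=a_{k-1}^*\otimes a_k$ for $k\ge2$, writing $a_k^*=(\mathbf{A}^*_k,\mathbf{b}^*_k,\mathbf{C}^*_k,\boldsymbol{\eta}^*_k,\mathbf{J}^*_k)$. Then for all $k=1,\ldots,N+M$, the Kalman filter mean $\overline{\mathbf{x}}_k=\mathbb{E}[\mathbf{x}_k\mid \text{observations } y_j \text{ at observed steps } j\le k]$ and covariance $\mathbf{P}_k=\mathrm{Cov}[\mathbf{x}_k\mid \text{same observations}]$ satisfy $\overline{\mathbf{x}}_k=\mathbf{b}^*_k$ and $\mathbf{P}_k=\mathbf{C}^*_k$.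
   Context: This arises from a Gaussian process regression problem in state-space form: a continuous-time linear SDE $d\mathbf{x}(t)/dt=\mathbf{G}\mathbf{x}(t)+\mathbf{L}\mathbf{w}(t)$ with $f(t)=\mathbf{H}\mathbf{x}(t)$ started from its stationary covariance $\mathbf{P}_\infty$, discretized at the sorted union of training times (observed) and prediction times (treated as missing observations), giving transition matrices $\mathbf{F}_{k-1}$ and process noise covariances $\mathbf{Q}_{k-1}$. The sequential Kalman filter for this model performs, at each step, a prediction through the transition (for $k\ge2$) and a measurement update only at steps with an observation (no update at missing steps). The matrices $\mathbf{I}+\mathbf{C}_i\mathbf{J}_j$ arising in the operator are assumed invertible (they are, since the $\mathbf{C}$ and $\mathbf{J}$ components are positive semidefinite). The operator $\otimes$ is associative, so the prefix elements can be computed by a parallel scan. *)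

theory Defs
  imports "HOL-Analysis.Analysis"
begin

(* Matrices are real^'n^'n, state vectors real^'n, the 1 x n_x matrix H is
   represented by the vector H :: real^'n (so H x = H \<bullet> x). *)

definition outer :: "real^('n::finite) \<Rightarrow> real^'n \<Rightarrow> real^'n^'n" where
  "outer u v = (\<chi> i j. u $ i * v $ j)"

definition psd :: "real^('n::finite)^'n \<Rightarrow> bool" where
  "psd M \<longleftrightarrow> transpose M = M \<and> (\<forall>x. 0 \<le> x \<bullet> (M *v x))"

type_synonym 'n elem = "(real^'n^'n) \<times> (real^'n) \<times> (real^'n^'n) \<times> (real^'n) \<times> (real^'n^'n)"

(* Parameters: Pinf, F, Q (F j, Q j = F_j, Q_j, used as F_(k-1), Q_(k-1)),
   H, obs (obs k: step k carries an observation), y (y k = y_k), s2 (s2 k = sigma_k^2). *)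
definition elem ::
  "real^('n::finite)^'n \<Rightarrow> (nat \<Rightarrow> real^'n^'n) \<Rightarrow> (nat \<Rightarrow> real^'n^'n) \<Rightarrow> real^'n
   \<Rightarrow> (nat \<Rightarrow> bool) \<Rightarrow> (nat \<Rightarrow> real) \<Rightarrow> (nat \<Rightarrow> real) \<Rightarrow> nat \<Rightarrow> 'n elem" where
  "elem Pinf F Q H obs y s2 k =
    (if \<not> obs k then
       (if k = 1 then (0, 0, Pinf, 0, 0)
        else (F (k-1), 0, Q (k-1), 0, 0))
     else if k = 1 then
       (let S = H \<bullet> (Pinf *v H) + s2 1;
            K = (1 / S) *\<^sub>R (Pinf *v H)
        in (0, y 1 *\<^sub>R K, Pinf - S *\<^sub>R outer K K, 0, 0))
     else
       (let S = H \<bullet> (Q (k-1) *v H) + s2 k;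
            K = (1 / S) *\<^sub>R (Q (k-1) *v H);
            G = transpose (F (k-1)) *v H
        in ((mat 1 - outer K H) ** F (k-1),
            y k *\<^sub>R K,
            (mat 1 - outer K H) ** Q (k-1),
            (y k / S) *\<^sub>R G,
            (1 / S) *\<^sub>R outer G G)))"

definition comb :: "('n::finite) elem \<Rightarrow> 'n elem \<Rightarrow> 'n elem" where
  "comb ai aj =
    (case ai of (Ai, bi, Ci, ei, Ji) \<Rightarrow>
     case aj of (Aj, bj, Cj, ej, Jj) \<Rightarrow>
      (let W = matrix_inv (mat 1 + Ci ** Jj);
           V = matrix_inv (mat 1 + Jj ** Ci)
       in (Aj ** W ** Ai,
           Aj *v (W *v (bi + Ci *v ej)) + bj,
           Aj ** W ** Ci ** transpose Aj + Cj,
           transpose Ai *v (V *v (ej - Jj *v bi)) + ei,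
           transpose Ai ** V ** Jj ** Ai + Ji)))"

(* Prefix elements a*_1 = a_1, a*_k = a*_(k-1) \<otimes> a_k (index 0 unused). *)
fun prefix ::
  "real^('n::finite)^'n \<Rightarrow> (nat \<Rightarrow> real^'n^'n) \<Rightarrow> (nat \<Rightarrow> real^'n^'n) \<Rightarrow> real^'n
   \<Rightarrow> (nat \<Rightarrow> bool) \<Rightarrow> (nat \<Rightarrow> real) \<Rightarrow> (nat \<Rightarrow> real) \<Rightarrow> nat \<Rightarrow> 'n elem" where
  "prefix Pinf F Q H obs y s2 0 = elem Pinf F Q H obs y s2 1"
| "prefix Pinf F Q H obs y s2 (Suc 0) = elem Pinf F Q H obs y s2 1"
| "prefix Pinf F Q H obs y s2 (Suc (Suc k)) =
     comb (prefix Pinf F Q H obs y s2 (Suc k)) (elem Pinf F Q H obs y s2 (Suc (Suc k)))"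

definition kf_update ::
  "real^('n::finite) \<Rightarrow> (nat \<Rightarrow> bool) \<Rightarrow> (nat \<Rightarrow> real) \<Rightarrow> (nat \<Rightarrow> real) \<Rightarrow> nat
   \<Rightarrow> (real^'n) \<times> (real^'n^'n) \<Rightarrow> (real^'n) \<times> (real^'n^'n)" where
  "kf_update H obs y s2 k mp =
    (case mp of (m, P) \<Rightarrow>
      if obs k then
        (let S = H \<bullet> (P *v H) + s2 k;
             K = (1 / S) *\<^sub>R (P *v H)
         in (m + (y k - H \<bullet> m) *\<^sub>R K, P - S *\<^sub>R outer K K))
      else (m, P))"

(* Kalman filter: kalman ... k = (filter mean xbar_k, filter covariance P_k), k \<ge> 1.
   Step 1 starts from the prior (0, Pinf); step k \<ge> 2 predicts through F_(k-1), Q_(k-1). *)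
fun kalman ::
  "real^('n::finite)^'n \<Rightarrow> (nat \<Rightarrow> real^'n^'n) \<Rightarrow> (nat \<Rightarrow> real^'n^'n) \<Rightarrow> real^'n
   \<Rightarrow> (nat \<Rightarrow> bool) \<Rightarrow> (nat \<Rightarrow> real) \<Rightarrow> (nat \<Rightarrow> real) \<Rightarrow> nat \<Rightarrow> (real^'n) \<times> (real^'n^'n)" where
  "kalman Pinf F Q H obs y s2 0 = (0, Pinf)"
| "kalman Pinf F Q H obs y s2 (Suc k) =
     kf_update H obs y s2 (Suc k)
       (if k = 0 then (0, Pinf)
        else (case kalman Pinf F Q H obs y s2 k of (m, P) \<Rightarrow>
                (F k *v m, F k ** P ** transpose (F k) + Q k)))"

end

theory Submission
  imports Defs
begin

lemma outer_mulv[simp]: "outer u v *v x = (v \<bullet> x) *\<^sub>R u"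
  by (simp add: outer_def matrix_vector_mult_def vec_eq_iff inner_vec_def sum_distrib_left mult_ac)

lemma mat_outer: "A ** outer u v = outer (A *v u) v"
  by (simp add: outer_def matrix_matrix_mult_def matrix_vector_mult_def vec_eq_iff sum_distrib_left sum_distrib_right mult_ac)

lemma transpose_outer: "transpose (outer u v) = outer v u"
  by (simp add: outer_def transpose_def vec_eq_iff)

lemma transpose_diff: "transpose (A - B) = transpose A - (transpose B :: real^'n^'m)"
  by (simp add: transpose_def vec_eq_iff)

lemma transpose_add: "transpose (A + B) = transpose A + (transpose B :: real^'n^'m)"
  by (simp add: transpose_def vec_eq_iff)

lemma dot_transpose: "(A *v x) \<bullet> y = x \<bullet> (transpose (A::real^'n^'m) *v y)"
  by (metis dot_lmul_matrix inner_commute transpose_matrix_vector)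

lemma sym_dot: "transpose A = A \<Longrightarrow> (A *v x) \<bullet> y = x \<bullet> ((A::real^'n^'n) *v y)"
  by (metis dot_transpose)

lemma matrix_inv_eq:
  fixes A B :: "real^'n^'n"
  assumes "A ** B = mat 1" "B ** A = mat 1"
  shows "matrix_inv A = B"
proof -
  have "\<exists>A'. A ** A' = mat 1 \<and> A' ** A = mat 1" using assms by blast
  then have h: "A ** matrix_inv A = mat 1 \<and> matrix_inv A ** A = mat 1"
    unfolding matrix_inv_def by (rule someI_ex)
  have "matrix_inv A = matrix_inv A ** (A ** B)" using assms by simp
  also have "\<dots> = B" using h by (simp add: matrix_mul_assoc)
  finally show ?thesis .
qed

lemma sherman:
  fixes u g :: "real^'n"
  assumes "1 + g \<bullet> u \<noteq> 0"
  shows "matrix_inv (mat 1 + outer u g) = mat 1 - (1 / (1 + g \<bullet> u)) *\<^sub>R outer u g"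
proof (rule matrix_inv_eq)
  define d where "d = 1 + g \<bullet> u"
  have d: "d \<noteq> 0" using assms d_def by simp
  have coef: "\<And>gx. - (gx / d) + (gx - gx / d * (g \<bullet> u)) = 0"
    using d by (simp add: d_def field_simps)
  have coef2: "\<And>gx. gx - gx / d - gx / d * (g \<bullet> u) = 0"
    using d by (simp add: d_def field_simps)
  show "(mat 1 + outer u g) ** (mat 1 - (1 / (1 + g \<bullet> u)) *\<^sub>R outer u g) = mat 1"
    unfolding matrix_eq
  proof
    fix x
    have "((mat 1 + outer u g) ** (mat 1 - (1 / d) *\<^sub>R outer u g)) *v x
       = x + (- ((g \<bullet> x) / d) + ((g \<bullet> x) - (g \<bullet> x) / d * (g \<bullet> u))) *\<^sub>R u"
      by (simp add: matrix_vector_mul_assoc[symmetric] matrix_vector_mult_add_rdistrib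
          matrix_vector_mult_diff_rdistrib scaleR_matrix_vector_assoc[symmetric]
          inner_diff_right algebra_simps)
    then show "((mat 1 + outer u g) ** (mat 1 - (1 / (1 + g \<bullet> u)) *\<^sub>R outer u g)) *v x = mat 1 *v x"
      using coef[of "g \<bullet> x"] by (simp add: d_def)
  qed
  show "(mat 1 - (1 / (1 + g \<bullet> u)) *\<^sub>R outer u g) ** (mat 1 + outer u g) = mat 1"
    unfolding matrix_eq
  proof
    fix x
    have "((mat 1 - (1 / d) *\<^sub>R outer u g) ** (mat 1 + outer u g)) *v x
       = x + ((g \<bullet> x) - (g \<bullet> x) / d - (g \<bullet> x) / d * (g \<bullet> u)) *\<^sub>R u"
      by (simp add: matrix_vector_mul_assoc[symmetric] matrix_vector_mult_add_rdistrib
          matrix_vector_mult_diff_rdistrib scaleR_matrix_vector_assoc[symmetric]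
          inner_add_right algebra_simps)
    then show "((mat 1 - (1 / (1 + g \<bullet> u)) *\<^sub>R outer u g) ** (mat 1 + outer u g)) *v x = mat 1 *v x"
      using coef2[of "g \<bullet> x"] by (simp add: d_def)
  qed
qed

lemma psd_predict:
  fixes P Q F :: "real^'n^'n"
  assumes "psd P" "psd Q"
  shows "psd (F ** P ** transpose F + Q)"
  unfolding psd_def
proof (intro conjI allI)
  show "transpose (F ** P ** transpose F + Q) = F ** P ** transpose F + Q"
    using assms unfolding psd_def by (simp add: transpose_add matrix_transpose_mul matrix_mul_assoc)
  fix x :: "real^'n"
  have "x \<bullet> ((F ** P ** transpose F + Q) *v x) = (transpose F *v x) \<bullet> (P *v (transpose F *v x)) + x \<bullet> (Q *v x)"
    using dot_transpose[of F "P *v (transpose F *v x)" x]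
    by (simp add: matrix_vector_mult_add_rdistrib inner_add_right matrix_vector_mul_assoc[symmetric]
          inner_commute[of x] del: transpose_matrix_vector) (metis inner_commute)
  then show "0 \<le> x \<bullet> ((F ** P ** transpose F + Q) *v x)"
    using assms unfolding psd_def by (metis add_nonneg_nonneg)
qed

lemma psd_update:
  fixes P :: "real^'n^'n" and H :: "real^'n"
  assumes "psd P" "s > 0"
  defines "S \<equiv> H \<bullet> (P *v H) + s"
  defines "K \<equiv> (1 / S) *\<^sub>R (P *v H)"
  shows "psd (P - S *\<^sub>R outer K K)"
proof -
  have sym: "transpose P = P" using assms(1) unfolding psd_def by simp
  have c0: "H \<bullet> (P *v H) \<ge> 0" using assms(1) unfolding psd_def by simp
  have Spos: "S > 0" using c0 assms(2) unfolding S_def by simp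
  show ?thesis unfolding psd_def
  proof (intro conjI allI)
    show "transpose (P - S *\<^sub>R outer K K) = P - S *\<^sub>R outer K K"
      by (simp add: transpose_diff transpose_scalar transpose_outer sym)
  next
    fix x :: "real^'n"
    define a where "a = x \<bullet> (P *v x)"
    define b where "b = H \<bullet> (P *v x)"
    define c where "c = H \<bullet> (P *v H)"
    define t where "t = - b / S"
    have bx: "x \<bullet> (P *v H) = b"
      unfolding b_def using sym_dot[OF sym, of x H] by (simp add: inner_commute)
    have bH: "H \<bullet> (P *v x) = b" unfolding b_def ..
    have "0 \<le> (x + t *\<^sub>R H) \<bullet> (P *v (x + t *\<^sub>R H))"
      using assms(1) unfolding psd_def by blast
    also have "\<dots> = a + 2 * t * b + t * t * c"
      unfolding a_def c_def using bx bH
      by (simp add: matrix_vector_right_distrib matrix_vector_mult_scaleR inner_add_left inner_add_right algebra_simps)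
    finally have q: "0 \<le> a + 2 * t * b + t * t * c" .
    have Sc: "c = S - s" unfolding S_def c_def by simp
    have "a - b * b / S \<ge> 0"
    proof -
      have "a + 2 * t * b + t * t * c = a - 2 * b * b / S + b * b * c / (S * S)"
        unfolding t_def by (simp add: field_simps)
      also have "\<dots> = (a - b * b / S) - b * b * s / (S * S)"
        unfolding Sc using Spos by (simp add: field_simps)
      finally have "0 \<le> (a - b * b / S) - b * b * s / (S * S)" using q by simp
      moreover have "b * b * s / (S * S) \<ge> 0" using assms(2) Spos by simp
      ultimately show ?thesis by linarith
    qed
    moreover have "x \<bullet> ((P - S *\<^sub>R outer K K) *v x) = a - b * b / S"
      unfolding a_def K_def using bx Spos inner_commute[of x "P *v H"]
      by (simp add: matrix_vector_mult_diff_rdistrib scaleR_matrix_vector_assoc[symmetric] inner_diff_right field_simps power2_eq_square)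
    ultimately show "0 \<le> x \<bullet> ((P - S *\<^sub>R outer K K) *v x)" by simp
  qed
qed

lemma matrix_mul_zero_right[simp]: "(A::real^'n^'m) ** (0::real^'k^'n) = 0"
  by (simp add: matrix_matrix_mult_def vec_eq_iff)

lemma outer_scaleL: "outer (a *\<^sub>R u) v = a *\<^sub>R outer u v"
  by (simp add: outer_def vec_eq_iff)

lemma obs_step:
  fixes P Q F J :: "real^'n^'n" and H m e :: "real^'n" and y s :: real
  assumes psdP: "psd P" and psdQ: "psd Q" and s: "s > 0"
  defines "S \<equiv> H \<bullet> (Q *v H) + s"
  defines "K \<equiv> (1 / S) *\<^sub>R (Q *v H)"
  defines "G \<equiv> transpose F *v H"
  defines "P' \<equiv> F ** P ** transpose F + Q"
  defines "S' \<equiv> H \<bullet> (P' *v H) + s"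
  defines "K' \<equiv> (1 / S') *\<^sub>R (P' *v H)"
  shows "\<exists>e' J'. comb (0, m, P, e, J) ((mat 1 - outer K H) ** F, y *\<^sub>R K, (mat 1 - outer K H) ** Q,
           (y / S) *\<^sub>R G, (1 / S) *\<^sub>R outer G G)
         = (0, F *v m + (y - H \<bullet> (F *v m)) *\<^sub>R K', P' - S' *\<^sub>R outer K' K', e', J')"
proof -
  have symP: "transpose P = P" using psdP unfolding psd_def by simp
  have symQ: "transpose Q = Q" using psdQ unfolding psd_def by simp
  define u where "u = P *v G"
  define c where "c = G \<bullet> u"
  define q where "q = Q *v H"
  define v where "v = F *v u"
  have c0: "c \<ge> 0" using psdP unfolding psd_def c_def u_def by simp
  have Spos: "S > 0" using psdQ s unfolding psd_def S_def by (simp add: add_nonneg_pos)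
  have HFw: "H \<bullet> (F *v w) = G \<bullet> w" for w
    unfolding G_def using dot_transpose[of F w H] by (simp add: inner_commute del: transpose_matrix_vector)
  have P'H: "P' *v H = v + q"
    unfolding P'_def v_def u_def q_def G_def
    by (simp add: matrix_vector_mult_add_rdistrib matrix_vector_mul_assoc[symmetric] del: transpose_matrix_vector)
  have Hv: "H \<bullet> v = c" unfolding v_def c_def HFw ..
  have S'eq: "S' = c + S"
    unfolding S'_def P'H S_def q_def using Hv by (simp add: inner_add_right)
  have S'pos: "S' > 0" using S'eq c0 Spos by simp
  have Gu: "G \<bullet> u = S' - S" using S'eq c_def by simp
  have W: "matrix_inv (mat 1 + P ** ((1 / S) *\<^sub>R outer G G)) = mat 1 - (1 / S') *\<^sub>R outer u G"
  proof -
    have "P ** ((1 / S) *\<^sub>R outer G G) = outer ((1 / S) *\<^sub>R u) G"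
      by (simp add: matrix_scalar_ac mat_outer outer_scaleL u_def scaleR_matrix_vector_assoc[symmetric])
    moreover have "1 + G \<bullet> ((1 / S) *\<^sub>R u) = S' / S"
      using Spos S'eq c_def by (simp add: field_simps)
    moreover have "(1 / (S' / S)) *\<^sub>R outer ((1 / S) *\<^sub>R u) G = (1 / S') *\<^sub>R outer u G"
      using Spos by (simp add: outer_scaleL)
    ultimately show ?thesis using sherman[of G "(1 / S) *\<^sub>R u"] Spos S'pos by simp
  qed
  define h where "h = H \<bullet> (F *v m)"
  have Gm: "G \<bullet> m = h" unfolding h_def HFw ..
  have Wz: "(mat 1 - (1 / S') *\<^sub>R outer u G) *v (m + P *v ((y / S) *\<^sub>R G)) = m + ((y - h) / S') *\<^sub>R u"
    using Spos S'pos
    by (simp add: matrix_vector_mult_diff_rdistrib scaleR_matrix_vector_assoc[symmetric]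
        matrix_vector_mult_scaleR u_def[symmetric] inner_add_right Gm Gu vec_eq_iff field_simps
        del: transpose_matrix_vector)
  define E where "E = mat 1 - outer K H"
  define r where "r = (y - h) / S'"
  have bres: "((mat 1 - outer K H) ** F) *v (m + ((y - h) / S') *\<^sub>R u) + y *\<^sub>R K
      = F *v m + (y - h) *\<^sub>R K'"
  proof -
    have t1: "F *v (m + r *\<^sub>R u) = F *v m + r *\<^sub>R v"
      by (simp add: matrix_vector_right_distrib matrix_vector_mult_scaleR v_def)
    have t2: "E *v (F *v m + r *\<^sub>R v) = F *v m + r *\<^sub>R v - (h + r * (S' - S)) *\<^sub>R K"
      unfolding E_def
      by (simp add: matrix_vector_mult_diff_rdistrib inner_add_right h_def[symmetric] Hv[unfolded c_def Gu])
    have co: "(y - h - r * (S' - S)) / S = r"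
      unfolding r_def using Spos S'pos by (simp add: field_simps)
    have "((mat 1 - outer K H) ** F) *v (m + ((y - h) / S') *\<^sub>R u) + y *\<^sub>R K
        = F *v m + r *\<^sub>R v - (h + r * (S' - S)) *\<^sub>R K + y *\<^sub>R K"
      unfolding E_def[symmetric] r_def[symmetric] matrix_vector_mul_assoc[symmetric] t1 t2 ..
    also have "\<dots> = F *v m + r *\<^sub>R v + ((y - h - r * (S' - S)) / S) *\<^sub>R q"
      unfolding K_def q_def[symmetric] using Spos by (simp add: vec_eq_iff field_simps)
    also have "\<dots> = F *v m + (y - h) *\<^sub>R K'"
      unfolding co K'_def P'H by (simp add: r_def scaleR_add_right)
    finally show ?thesis .
  qed
  have Cres: "(E ** F) ** (mat 1 - (1 / S') *\<^sub>R outer u G) ** P ** transpose (E ** F) + E ** Q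
      = P' - S' *\<^sub>R outer K' K'"
    unfolding matrix_eq
  proof
    fix x
    define x1 where "x1 = transpose F *v x"
    define p where "p = P *v x1"
    have Gp: "G \<bullet> p = v \<bullet> x"
    proof -
      have "G \<bullet> p = u \<bullet> x1" unfolding p_def u_def using sym_dot[OF symP, of G x1] by simp
      also have "\<dots> = v \<bullet> x" unfolding x1_def v_def using dot_transpose[of F u x] by simp
      finally show ?thesis .
    qed
    have HFp: "H \<bullet> (F *v p) = v \<bullet> x" using HFw Gp by simp
    have HQx: "H \<bullet> (Q *v x) = q \<bullet> x" unfolding q_def using sym_dot[OF symQ, of H x] by (simp add: inner_commute)
    have Kx: "K \<bullet> x = (q \<bullet> x) / S" unfolding K_def q_def by simp
    have HFu: "H \<bullet> (F *v u) = S' - S" using HFw Gu by simp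
    have trE: "transpose (E ** F) = transpose F ** (mat 1 - outer H K)"
      unfolding E_def by (simp add: matrix_transpose_mul transpose_diff transpose_outer)
    define \<alpha> where "\<alpha> = (q \<bullet> x) / S"
    define \<beta> where "\<beta> = v \<bullet> x"
    define \<gamma> where "\<gamma> = q \<bullet> x"
    define k where "k = (\<gamma> + \<beta>) / S'"
    have s1: "transpose (E ** F) *v x = x1 - \<alpha> *\<^sub>R G"
      unfolding trE by (simp add: matrix_vector_mul_assoc[symmetric] matrix_vector_mult_diff_distrib matrix_vector_mult_diff_rdistrib
         matrix_vector_mult_scaleR Kx \<alpha>_def x1_def G_def del: transpose_matrix_vector)
    have s2: "P *v (x1 - \<alpha> *\<^sub>R G) = p - \<alpha> *\<^sub>R u"
      by (simp add: matrix_vector_mult_diff_distrib matrix_vector_mult_scaleR p_def u_def)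
    have s3: "(mat 1 - (1 / S') *\<^sub>R outer u G) *v (p - \<alpha> *\<^sub>R u) = p - k *\<^sub>R u"
    proof -
      have "(mat 1 - (1 / S') *\<^sub>R outer u G) *v (p - \<alpha> *\<^sub>R u)
          = p - \<alpha> *\<^sub>R u - ((1 / S') * (\<beta> - \<alpha> * (S' - S))) *\<^sub>R u"
        by (simp add: matrix_vector_mult_diff_rdistrib scaleR_matrix_vector_assoc[symmetric]
            inner_diff_right Gp Gu \<beta>_def)
      also have "\<dots> = p - k *\<^sub>R u"
      proof -
        have "\<alpha> + (1 / S') * (\<beta> - \<alpha> * (S' - S)) = k"
          unfolding k_def \<alpha>_def \<gamma>_def using Spos S'pos by (simp add: field_simps)
        then show ?thesis by (metis diff_diff_eq scaleR_left_distrib)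
      qed
      finally show ?thesis .
    qed
    have s4: "F *v (p - k *\<^sub>R u) = F *v p - k *\<^sub>R v"
      by (simp add: matrix_vector_mult_diff_distrib matrix_vector_mult_scaleR v_def)
    have s5: "E *v (F *v p - k *\<^sub>R v) = F *v p - k *\<^sub>R v - ((\<beta> - k * (S' - S)) / S) *\<^sub>R q"
      unfolding E_def K_def q_def[symmetric]
      by (simp add: matrix_vector_mult_diff_rdistrib inner_diff_right HFp Hv[unfolded c_def Gu] \<beta>_def)
    have s6: "E *v (Q *v x) = Q *v x - (\<gamma> / S) *\<^sub>R q"
      unfolding E_def K_def q_def[symmetric]
      by (simp add: matrix_vector_mult_diff_rdistrib HQx \<gamma>_def)
    have lhs: "((E ** F) ** (mat 1 - (1 / S') *\<^sub>R outer u G) ** P ** transpose (E ** F) + E ** Q) *v x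
       = F *v p + Q *v x - k *\<^sub>R (v + q)"
    proof -
      have "((E ** F) ** (mat 1 - (1 / S') *\<^sub>R outer u G) ** P ** transpose (E ** F) + E ** Q) *v x
         = E *v (F *v ((mat 1 - (1 / S') *\<^sub>R outer u G) *v (P *v (transpose (E ** F) *v x)))) + E *v (Q *v x)"
        by (simp add: matrix_vector_mult_add_rdistrib matrix_vector_mul_assoc matrix_mul_assoc del: transpose_matrix_vector)
      also have "\<dots> = F *v p - k *\<^sub>R v - ((\<beta> - k * (S' - S)) / S) *\<^sub>R q + (Q *v x - (\<gamma> / S) *\<^sub>R q)"
        unfolding s1 s2 s3 s4 s5 s6 ..
      also have "\<dots> = F *v p + Q *v x - k *\<^sub>R (v + q)"
      proof -
        have "(\<beta> - k * (S' - S)) / S + \<gamma> / S = k"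
          unfolding k_def using Spos S'pos by (simp add: field_simps)
        then show ?thesis by (simp add: algebra_simps scaleR_left_distrib[symmetric] add_divide_distrib[symmetric])
      qed
      finally show ?thesis .
    qed
    have rhs: "(P' - S' *\<^sub>R outer K' K') *v x = F *v p + Q *v x - k *\<^sub>R (v + q)"
    proof -
      have "(P' - S' *\<^sub>R outer K' K') *v x = P' *v x - (S' * (1 / S') * (1 / S') * ((v + q) \<bullet> x)) *\<^sub>R (v + q)"
        unfolding K'_def P'H
        by (simp add: matrix_vector_mult_diff_rdistrib scaleR_matrix_vector_assoc[symmetric] mult_ac)
      also have "S' * (1 / S') * (1 / S') * ((v + q) \<bullet> x) = k"
        unfolding k_def \<beta>_def \<gamma>_def using S'pos by (simp add: field_simps inner_add_left)
      also have "P' *v x = F *v p + Q *v x"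
        unfolding P'_def p_def x1_def
        by (simp add: matrix_vector_mult_add_rdistrib matrix_vector_mul_assoc matrix_mul_assoc del: transpose_matrix_vector)
      finally show ?thesis .
    qed
    show "((E ** F) ** (mat 1 - (1 / S') *\<^sub>R outer u G) ** P ** transpose (E ** F) + E ** Q) *v x
       = (P' - S' *\<^sub>R outer K' K') *v x" using lhs rhs by simp
  qed
  show ?thesis
    unfolding comb_def Let_def E_def[symmetric]
    using Wz bres[folded E_def] Cres
    by (simp add: W h_def del: transpose_matrix_vector)
qed

lemma matrix_inv_id: "matrix_inv (mat 1 :: real^'n^'n) = mat 1"
  by (rule matrix_inv_eq) simp_all

lemma main_inv:
  fixes Pinf :: "real^'n^'n" and F Q :: "nat \<Rightarrow> real^'n^'n" and H :: "real^'n"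
    and obs :: "nat \<Rightarrow> bool" and y sg :: "nat \<Rightarrow> real" and T :: nat
  assumes pinf: "psd Pinf"
    and pq: "\<And>k. 2 \<le> k \<Longrightarrow> k \<le> T \<Longrightarrow> psd (Q (k - 1))"
    and ps: "\<And>k. 1 \<le> k \<Longrightarrow> k \<le> T \<Longrightarrow> obs k \<Longrightarrow> sg k > 0"
  shows "Suc k \<le> T \<Longrightarrow> (\<exists>e J. prefix Pinf F Q H obs y sg (Suc k)
            = (0, fst (kalman Pinf F Q H obs y sg (Suc k)), snd (kalman Pinf F Q H obs y sg (Suc k)), e, J))
          \<and> psd (snd (kalman Pinf F Q H obs y sg (Suc k)))"
proof (induction k)
  case 0
  show ?case
  proof (cases "obs 1")
    case True
    have s: "sg 1 > 0" using ps[of 1] 0 True by simp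
    show ?thesis using True psd_update[OF pinf s, of H]
      by (simp add: elem_def kf_update_def Let_def)
  next
    case False
    then show ?thesis using pinf by (simp add: elem_def kf_update_def)
  qed
next
  case (Suc k)
  then obtain e J where IH: "prefix Pinf F Q H obs y sg (Suc k)
            = (0, fst (kalman Pinf F Q H obs y sg (Suc k)), snd (kalman Pinf F Q H obs y sg (Suc k)), e, J)"
    and psdP: "psd (snd (kalman Pinf F Q H obs y sg (Suc k)))" by auto
  define m where "m = fst (kalman Pinf F Q H obs y sg (Suc k))"
  define P where "P = snd (kalman Pinf F Q H obs y sg (Suc k))"
  have kal: "kalman Pinf F Q H obs y sg (Suc k) = (m, P)" by (simp add: m_def P_def)
  have pre: "prefix Pinf F Q H obs y sg (Suc k) = (0, m, P, e, J)" using IH by (simp add: m_def P_def)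
  have psdP': "psd P" using psdP P_def by simp
  have psdQ: "psd (Q (Suc k))" using pq[of "Suc (Suc k)"] Suc.prems by simp
  have kal2: "kalman Pinf F Q H obs y sg (Suc (Suc k)) = kf_update H obs y sg (Suc (Suc k))
      (F (Suc k) *v m, F (Suc k) ** P ** transpose (F (Suc k)) + Q (Suc k))"
    using kal by simp
  have psdpred: "psd (F (Suc k) ** P ** transpose (F (Suc k)) + Q (Suc k))"
    by (rule psd_predict[OF psdP' psdQ])
  show ?case
  proof (cases "obs (Suc (Suc k))")
    case False
    have el: "elem Pinf F Q H obs y sg (Suc (Suc k)) = (F (Suc k), 0, Q (Suc k), 0, 0)"
      using False by (simp add: elem_def)
    show ?thesis using False psdpred
      unfolding kal2 by (simp add: pre el comb_def Let_def matrix_inv_id kf_update_def del: kalman.simps)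
  next
    case True
    have s: "sg (Suc (Suc k)) > 0" using ps[of "Suc (Suc k)"] Suc.prems True by simp
    obtain e' J' where st: "comb (0, m, P, e, J) (elem Pinf F Q H obs y sg (Suc (Suc k)))
       = (0, fst (kalman Pinf F Q H obs y sg (Suc (Suc k))), snd (kalman Pinf F Q H obs y sg (Suc (Suc k))), e', J')"
      using obs_step[OF psdP' psdQ s, where H=H and F="F (Suc k)" and J=J and m=m and e=e and y="y (Suc (Suc k))"] True
      unfolding kal2 by (auto simp: elem_def Let_def kf_update_def simp del: kalman.simps)
    show ?thesis
      using st psd_update[OF psdpred s, of H] True
      unfolding kal2 by (simp add: pre kf_update_def Let_def del: kalman.simps)
  qed
qed

theorem proposition1:
  fixes Pinf :: "real^'n^'n" and F Q :: "nat \<Rightarrow> real^'n^'n" and H :: "real^'n"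
    and obs :: "nat \<Rightarrow> bool" and y s2 :: "nat \<Rightarrow> real" and T :: nat
  assumes "psd Pinf"
    and "\<And>k. 2 \<le> k \<Longrightarrow> k \<le> T \<Longrightarrow> psd (Q (k - 1))"
    and "\<And>k. 1 \<le> k \<Longrightarrow> k \<le> T \<Longrightarrow> obs k \<Longrightarrow> s2 k > 0"
  shows "\<forall>k\<in>{1..T}.
           (case prefix Pinf F Q H obs y s2 k of (A, b, C, eta, J) \<Rightarrow>
              kalman Pinf F Q H obs y s2 k = (b, C))"
proof
  fix k assume k: "k \<in> {1..T}"
  then obtain k' where kk: "k = Suc k'" by (cases k) auto
  have "Suc k' \<le> T" using k kk by simp
  from main_inv[where Pinf=Pinf and F=F and Q=Q and H=H and obs=obs and y=y and sg=s2 and T=T and k=k', OF assms this] obtain e J where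
    "prefix Pinf F Q H obs y s2 (Suc k')
      = (0, fst (kalman Pinf F Q H obs y s2 (Suc k')), snd (kalman Pinf F Q H obs y s2 (Suc k')), e, J)"
    by blast
  then show "case prefix Pinf F Q H obs y s2 k of (A, b, C, eta, J) \<Rightarrow>
              kalman Pinf F Q H obs y s2 k = (b, C)"
    unfolding kk by (simp del: kalman.simps prefix.simps)
qed

end
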